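(* Assume there is a linear operator $\mathfrak{R}:V\to W'$ and constants $\alpha_*>0$, $M^*>0$ with $$\inf_{w\in W,\,w\ne0}\ \sup_{v\in V,\,v\neq0}\frac{\langle\mathfrak{R}v,w\rangle}{\|w\|_W\|v\|_V}\ge\alpha_*,\qquad\|\mathfrak{R}v\|_{W'}\le M^*\|v\|_V\ \ \forall v\in V,$$ and that there is $\kappa>0$ with $$\kappa\|w\|_W\le\sup_{v_\eta\in V_\eta,\ v_\eta\neq0}\frac{\mathcal{A}(w,v_\eta)}{\|v_\eta\|_V}\quad\text{for all } w\in W_\theta\cup S_\theta.$$ Let $u^*_\theta\in\mathrm{cl}^{seq}_w(W_\theta)$ be the weak limit in $W$ of a minimizing sequence $(\tilde w^n_\theta)\subset W_\theta$, i.e. $\lim_n\|u-\tilde w^n_\theta\|_{op,\eta}=\inf_{w_\theta\in W_\theta}\|u-w_\theta\|_{op,\eta}$. Then $$\|u-u^*_\theta\|_W\le\Big(1+2\frac{M^*}{\alpha_*}\frac{M}{\kappa}\Big)\inf_{w_\theta\in W_\theta}\|u-w_\theta\|_W.$$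
   Context: $W$ and $V$ are reflexive separable real Banach spaces, $W'$ the dual of $W$ with duality pairing $\langle\cdot,\cdot\rangle$. $\mathcal{A}:W\times V\to\mathbb{R}$ is a bilinear form with $\mathcal{A}(w,v)\le M\|w\|_W\|v\|_V$, $\mathcal{F}:V\to\mathbb{R}$ is bounded linear, and $u\in W$ is the unique solution of $\mathcal{A}(u,v)=\mathcal{F}(v)$ for all $v\in V$. $W_\theta\subseteq W$ and $V_\eta\subseteq V$ are arbitrary subsets, $V_\eta$ containing an element of nonzero norm. For $w\in W$, $\|w\|_{op,\eta}:=\sup_{v_\eta\in V_\eta,\ \|v_\eta\|_V\neq0}\mathcal{A}(w,v_\eta)/\|v_\eta\|_V$. $S_\theta:=\{w_1-w_2:\ w_1,w_2\in W_\theta\}$. $\mathrm{cl}^{seq}_w(W_\theta)$ is the set of all weak limits in $W$ of sequences in $W_\theta$. *)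

theory Defs
  imports "HOL-Analysis.Analysis"
begin

definition weak_conv :: "(nat \<Rightarrow> 'a::real_normed_vector) \<Rightarrow> 'a \<Rightarrow> bool" where
  "weak_conv xs x \<longleftrightarrow> (\<forall>f :: 'a \<Rightarrow>\<^sub>L real. (\<lambda>n. blinfun_apply f (xs n)) \<longlonglongrightarrow> blinfun_apply f x)"

definition weak_seq_closure :: "'a::real_normed_vector set \<Rightarrow> 'a set" where
  "weak_seq_closure S = {x. \<exists>xs. (\<forall>n. xs n \<in> S) \<and> weak_conv xs x}"

definition reflexive_space :: "'a::real_normed_vector itself \<Rightarrow> bool" where
  "reflexive_space _ \<longleftrightarrow>
     (\<forall>\<phi> :: ('a \<Rightarrow>\<^sub>L real) \<Rightarrow>\<^sub>L real. \<exists>x::'a. \<forall>f. blinfun_apply \<phi> f = blinfun_apply f x)"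

definition separable_space :: "'a::real_normed_vector itself \<Rightarrow> bool" where
  "separable_space _ \<longleftrightarrow> (\<exists>D :: 'a set. countable D \<and> closure D = UNIV)"

definition op_norm_eta ::
  "('w \<Rightarrow> 'v::real_normed_vector \<Rightarrow> real) \<Rightarrow> 'v set \<Rightarrow> 'w \<Rightarrow> real" where
  "op_norm_eta A Veta w = (SUP v\<in>{v \<in> Veta. v \<noteq> 0}. A w v / norm v)"

definition diff_set :: "'a::ab_group_add set \<Rightarrow> 'a set" where
  "diff_set S = {w1 - w2 | w1 w2. w1 \<in> S \<and> w2 \<in> S}"

end

theory Submission
  imports Defs
begin

theorem lemma3:
  fixes A :: "'w::banach \<Rightarrow> 'v::banach \<Rightarrow> real"
    and F :: "'v \<Rightarrow> real"
    and u :: 'w and M :: real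
    and Wtheta :: "'w set" and Veta :: "'v set"
    and R :: "'v \<Rightarrow> ('w \<Rightarrow>\<^sub>L real)"
    and alpha_star M_star kappa :: real
    and wt :: "nat \<Rightarrow> 'w" and u_star :: 'w
  assumes reflW: "reflexive_space TYPE('w)" and sepW: "separable_space TYPE('w)"
    and reflV: "reflexive_space TYPE('v)" and sepV: "separable_space TYPE('v)"
    and bilin: "bilinear A"
    and A_bound: "\<And>w v. A w v \<le> M * norm w * norm v"
    and F_lin: "bounded_linear F"
    and u_unique: "\<And>w. (\<forall>v. A w v = F v) \<longleftrightarrow> w = u"
    and Veta_nz: "\<exists>v\<in>Veta. norm v \<noteq> 0"
    and R_lin: "linear R"
    and alpha_pos: "alpha_star > 0" and Mstar_pos: "M_star > 0"
    and infsup: "\<And>w. w \<noteq> 0 \<Longrightarrow>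
        alpha_star \<le> (SUP v\<in>{v. v \<noteq> 0}. blinfun_apply (R v) w / (norm w * norm v))"
    and R_bound: "\<And>v. norm (R v) \<le> M_star * norm v"
    and kappa_pos: "kappa > 0"
    and kappa_stab: "\<And>w. w \<in> Wtheta \<union> diff_set Wtheta \<Longrightarrow>
        kappa * norm w \<le> op_norm_eta A Veta w"
    and wt_in: "\<And>n. wt n \<in> Wtheta"
    and wt_min: "(\<lambda>n. op_norm_eta A Veta (u - wt n)) \<longlonglongrightarrow>
        (INF w\<in>Wtheta. op_norm_eta A Veta (u - w))"
    and weak_lim: "weak_conv wt u_star"
  shows "norm (u - u_star) \<le>
    (1 + 2 * (M_star / alpha_star) * (M / kappa)) * (INF w\<in>Wtheta. norm (u - w))"
proof -
  define Vs where "Vs = {v \<in> Veta. v \<noteq> 0}"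
  define op where "op = (\<lambda>x. SUP v\<in>Vs. A x v / norm v)"
  have opx: "op x = (SUP v\<in>Vs. A x v / norm v)" for x by (simp add: op_def)
  have opdef: "op_norm_eta A Veta x = op x" for x
    unfolding op_norm_eta_def op_def Vs_def by simp
  obtain v0 where v0: "v0 \<in> Veta" "norm v0 \<noteq> 0" using Veta_nz by blast
  have Vs_ne: "Vs \<noteq> {}" using v0 unfolding Vs_def by auto
  have bdd: "bdd_above ((\<lambda>v. A x v / norm v) ` Vs)" for x
  proof (rule bdd_aboveI2)
    fix v assume "v \<in> Vs"
    then have "norm v > 0" unfolding Vs_def by auto
    then show "A x v / norm v \<le> M * norm x"
      using A_bound[of x v] by (simp add: divide_le_eq)
  qed
  have op_ge: "v \<in> Vs \<Longrightarrow> A x v / norm v \<le> op x" for x v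
    unfolding opx using bdd by (rule cSUP_upper2) auto
  have op_le: "op x \<le> M * norm x" for x
    unfolding opx
  proof (rule cSUP_least[OF Vs_ne])
    fix v assume "v \<in> Vs"
    then have "norm v > 0" unfolding Vs_def by auto
    then show "A x v / norm v \<le> M * norm x"
      using A_bound[of x v] by (simp add: divide_le_eq)
  qed
  have op_add: "op (a + b) \<le> op a + op b" for a b
    unfolding opx[of "a+b"]
  proof (rule cSUP_least[OF Vs_ne])
    fix v assume v: "v \<in> Vs"
    have "A (a + b) v / norm v = A a v / norm v + A b v / norm v"
      using bilinear_ladd[OF bilin] by (simp add: add_divide_distrib)
    also have "\<dots> \<le> op a + op b" using op_ge[OF v, of a] op_ge[OF v, of b] by simp
    finally show "A (a + b) v / norm v \<le> op a + op b" .
  qed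
  have stab: "w \<in> Wtheta \<Longrightarrow> w' \<in> Wtheta \<Longrightarrow> kappa * norm (w - w') \<le> op (w - w')" for w w'
    using kappa_stab[of "w - w'"] unfolding diff_set_def opdef by blast
  define L where "L = (INF w\<in>Wtheta. op (u - w))"
  have lim: "(\<lambda>n. op (u - wt n)) \<longlonglongrightarrow> L" using wt_min unfolding opdef L_def .
  have Wne: "Wtheta \<noteq> {}" using wt_in by blast
  have bddb: "bdd_below ((\<lambda>w. op (u - w)) ` Wtheta)"
  proof (rule bdd_belowI2)
    fix w assume w: "w \<in> Wtheta"
    have "wt 0 - w = (wt 0 - u) + (u - w)" by simp
    then have "op (wt 0 - w) \<le> op (wt 0 - u) + op (u - w)" using op_add by metis
    moreover have "kappa * norm (wt 0 - w) \<le> op (wt 0 - w)" using stab[OF wt_in w] .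
    moreover have "kappa * norm (wt 0 - w) \<ge> 0" using kappa_pos by simp
    ultimately show "- op (wt 0 - u) \<le> op (u - w)" by linarith
  qed
  have L_le: "w \<in> Wtheta \<Longrightarrow> L \<le> op (u - w)" for w
    unfolding L_def using bddb by (rule cINF_lower2) auto
  show ?thesis
  proof (cases "M \<ge> 0")
    case False
    have allz: "w = 0" for w :: 'w
    proof -
      have "A w v0 \<le> M * norm w * norm v0" by (rule A_bound)
      moreover have "A w (- v0) \<le> M * norm w * norm (- v0)" by (rule A_bound)
      moreover have "A w (- v0) = - A w v0"
        using bilin unfolding bilinear_def by (simp add: linear_neg)
      ultimately have "M * norm w * norm v0 \<ge> 0" by simp
      moreover have "norm v0 > 0" using v0 by simp
      ultimately have "M * norm w \<ge> 0" by (simp add: zero_le_mult_iff)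
      then have "norm w = 0" using False by (simp add: zero_le_mult_iff)
      then show ?thesis by simp
    qed
    have "(\<lambda>w. norm (u - w)) ` Wtheta = {0}"
      using Wne allz by auto
    then have "(INF w\<in>Wtheta. norm (u - w)) = 0" by simp
    then show ?thesis using allz[of "u - u_star"] by simp
  next
    case Mnn: True
    define K where "K = 1 + 2 * (M_star / alpha_star) * (M / kappa)"
    have Kpos: "K \<ge> 1" unfolding K_def using Mnn alpha_pos Mstar_pos kappa_pos by simp
    have main: "norm (u - u_star) \<le> K * norm (u - w)" if w: "w \<in> Wtheta" for w
    proof -
      define D where "D = 2 * M * norm (u - w) / kappa"
      have Dnn: "D \<ge> 0" unfolding D_def using Mnn kappa_pos by simp
      have e: "kappa * norm (w - wt n) \<le> op (u - wt n) + M * norm (u - w)" for n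
      proof -
        have "w - wt n = (u - wt n) + (w - u)" by simp
        then have "op (w - wt n) \<le> op (u - wt n) + op (w - u)" using op_add by metis
        moreover have "op (w - u) \<le> M * norm (u - w)"
          using op_le[of "w - u"] by (simp add: norm_minus_commute)
        moreover have "kappa * norm (w - wt n) \<le> op (w - wt n)" using stab[OF w wt_in] .
        ultimately show ?thesis by linarith
      qed
      have Rb: "blinfun_apply (R v) (u_star - w) \<le> M_star * norm v * D" for v
      proof -
        have c1: "(\<lambda>n. blinfun_apply (R v) (wt n - w)) \<longlonglongrightarrow> blinfun_apply (R v) (u_star - w)"
          using weak_lim unfolding weak_conv_def
          by (auto simp: blinfun.diff_right intro!: tendsto_diff)
        have c2: "(\<lambda>n. M_star * norm v * ((op (u - wt n) + M * norm (u - w)) / kappa))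
            \<longlonglongrightarrow> M_star * norm v * ((L + M * norm (u - w)) / kappa)"
          using kappa_pos by (intro tendsto_intros lim) auto
        have le: "blinfun_apply (R v) (wt n - w) \<le> M_star * norm v * ((op (u - wt n) + M * norm (u - w)) / kappa)" for n
        proof -
          have "blinfun_apply (R v) (wt n - w) \<le> norm (R v) * norm (wt n - w)"
            using norm_blinfun[of "R v" "wt n - w"] by simp
          also have "\<dots> \<le> M_star * norm v * norm (w - wt n)"
            using R_bound[of v] by (simp add: norm_minus_commute mult_right_mono)
          also have "\<dots> \<le> M_star * norm v * ((op (u - wt n) + M * norm (u - w)) / kappa)"
            using e[of n] kappa_pos Mstar_pos
            by (intro mult_left_mono) (simp_all add: le_divide_eq mult.commute)
          finally show ?thesis .
        qed
        have "blinfun_apply (R v) (u_star - w) \<le> M_star * norm v * ((L + M * norm (u - w)) / kappa)"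
          using c1 c2 le by (intro tendsto_le[OF _ c2 c1]) auto
        also have "\<dots> \<le> M_star * norm v * D"
          unfolding D_def using L_le[OF w] op_le[of "u - w"] kappa_pos Mstar_pos
          by (intro mult_left_mono) (simp_all add: divide_right_mono)
        finally show ?thesis .
      qed
      have xb: "norm (u_star - w) \<le> M_star * D / alpha_star"
      proof (cases "u_star - w = 0")
        case True then show ?thesis using Dnn Mstar_pos alpha_pos by simp
      next
        case False
        let ?x = "u_star - w"
        have nx: "norm ?x > 0" using False by simp
        have "alpha_star \<le> (SUP v\<in>{v. v \<noteq> 0}. blinfun_apply (R v) ?x / (norm ?x * norm v))"
          using infsup[OF False] .
        also have "\<dots> \<le> M_star * D / norm ?x"
        proof (rule cSUP_least)
          show "{v::'v. v \<noteq> 0} \<noteq> {}" using v0 by auto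
          fix v :: 'v assume "v \<in> {v. v \<noteq> 0}"
          then have nv: "norm v > 0" by simp
          have "blinfun_apply (R v) ?x \<le> M_star * norm v * D" by (rule Rb)
          then show "blinfun_apply (R v) ?x / (norm ?x * norm v) \<le> M_star * D / norm ?x"
            using nv nx by (simp add: divide_simps) (simp add: algebra_simps)
        qed
        finally have "alpha_star \<le> M_star * D / norm ?x" .
        then have "alpha_star * norm ?x \<le> M_star * D" using nx by (simp add: le_divide_eq)
        then show ?thesis using alpha_pos by (simp add: le_divide_eq mult.commute)
      qed
      have "norm (u - u_star) \<le> norm (u - w) + norm (u_star - w)"
        using norm_triangle_ineq4[of "u - w" "u_star - w"] by simp
      also have "\<dots> \<le> norm (u - w) + M_star * D / alpha_star" using xb by simp
      also have "\<dots> = K * norm (u - w)"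
        unfolding K_def D_def using alpha_pos kappa_pos by (simp add: field_simps)
      finally show ?thesis .
    qed
    have "norm (u - u_star) / K \<le> (INF w\<in>Wtheta. norm (u - w))"
    proof (rule cINF_greatest[OF Wne])
      fix w assume "w \<in> Wtheta"
      then show "norm (u - u_star) / K \<le> norm (u - w)"
        using main Kpos by (simp add: divide_le_eq mult.commute)
    qed
    then show ?thesis using Kpos unfolding K_def[symmetric] by (simp add: divide_le_eq mult.commute)
  qed
qed

end
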